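(* If $G$ is a finite directed acyclic graph, then the following statements are equivalent: (1) $\mathrm{DT}(G)$ is a cone with one of the edges of $G$ as apex; (2) there is an edge of $G$ which is in all maximal directed forests of $G$; (3) there is a vertex in $G$ with in-degree $1$; (4) $\prod_{v\in V(G)}(d^-(v)-1)=0$; (5) $\mathrm{DT}(G)$ is contractible.
   Context: A directed acyclic graph has no directed cycles. A directed forest is a set of edges which, as a graph, is acyclic with at most one edge directed to each vertex; a maximal directed forest is one not properly contained in another directed forest of $G$. $\mathrm{DT}(G)$ is the simplicial complex with vertex set $E(G)$ whose simplices are the directed forests. $d^-(v)$ denotes the in-degree of $v$ (number of edges directed to $v$). *)

theory Defs
  imports "HOL-Analysis.Analysis"
begin

text \<open>A finite directed graph is given by a vertex set V and an edge set
E of ordered pairs (u,v), meaning an edge directed from u to v.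
Acyclicity is the library notion acyclic (no directed cycles).\<close>

definition in_degree :: "('v \<times> 'v) set \<Rightarrow> 'v \<Rightarrow> nat" where
  "in_degree E v = card {e \<in> E. snd e = v}"

definition directed_forest :: "('v \<times> 'v) set \<Rightarrow> ('v \<times> 'v) set \<Rightarrow> bool" where
  "directed_forest E F \<longleftrightarrow> F \<subseteq> E \<and> acyclic F \<and> (\<forall>v. in_degree F v \<le> 1)"

definition maximal_directed_forest :: "('v \<times> 'v) set \<Rightarrow> ('v \<times> 'v) set \<Rightarrow> bool" where
  "maximal_directed_forest E F \<longleftrightarrow> directed_forest E F \<and>
     \<not> (\<exists>F'. directed_forest E F' \<and> F \<subset> F')"

text \<open>DT(G): the simplicial complex on vertex set E whose simplices are the
directed forests (given by its set of faces).\<close>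
definition DT :: "('v \<times> 'v) set \<Rightarrow> ('v \<times> 'v) set set" where
  "DT E = {F. directed_forest E F}"

definition is_cone_with_apex :: "'a set \<Rightarrow> 'a set set \<Rightarrow> 'a \<Rightarrow> bool" where
  "is_cone_with_apex X K a \<longleftrightarrow> a \<in> X \<and> (\<forall>\<sigma>\<in>K. insert a \<sigma> \<in> K)"

text \<open>Geometric realization of a finite simplicial complex K on ground set X,
as the set of barycentric-coordinate functions X \<Rightarrow> real (zero outside X)
whose support is a simplex, with the (product) topology on functions.\<close>
definition geom_realization :: "'a set \<Rightarrow> 'a set set \<Rightarrow> ('a \<Rightarrow> real) set" where
  "geom_realization X K = {f. (\<forall>x. 0 \<le> f x) \<and> {x. f x \<noteq> 0} \<in> K \<and>
       {x. f x \<noteq> 0} \<subseteq> X \<and> sum f X = 1}"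

definition contractible_complex :: "'a set \<Rightarrow> 'a set set \<Rightarrow> bool" where
  "contractible_complex X K \<longleftrightarrow> geom_realization X K \<noteq> {} \<and> contractible (geom_realization X K)"

end

theory Submission
  imports Defs "HOL-Homology.Brouwer_Degree"
begin


lemma df_iff: "acyclic E \<Longrightarrow> directed_forest E F \<longleftrightarrow> F \<subseteq> E \<and> (\<forall>v. in_degree F v \<le> 1)"
  unfolding directed_forest_def using acyclic_subset by blast

lemma indeg_le1_iff: "finite F \<Longrightarrow> in_degree F v \<le> 1 \<longleftrightarrow>
   (\<forall>e1\<in>F. \<forall>e2\<in>F. snd e1 = v \<longrightarrow> snd e2 = v \<longrightarrow> e1 = e2)"
  unfolding in_degree_def One_nat_def
  by (subst card_le_Suc0_iff_eq, simp) blast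

lemma forest_iff:
  assumes "finite E" "acyclic E"
  shows "directed_forest E F \<longleftrightarrow> F \<subseteq> E \<and> (\<forall>e1\<in>F. \<forall>e2\<in>F. snd e1 = snd e2 \<longrightarrow> e1 = e2)"
proof -
  have key: "(\<forall>v. in_degree F v \<le> 1) \<longleftrightarrow> (\<forall>e1\<in>F. \<forall>e2\<in>F. snd e1 = snd e2 \<longrightarrow> e1 = e2)"
    if "F \<subseteq> E" for F
  proof -
    have fin: "finite F" using that assms(1) finite_subset by blast
    show ?thesis
    proof
      assume L: "\<forall>v. in_degree F v \<le> 1"
      show "\<forall>e1\<in>F. \<forall>e2\<in>F. snd e1 = snd e2 \<longrightarrow> e1 = e2"
      proof (intro ballI impI)
        fix e1 e2 assume h: "e1 \<in> F" "e2 \<in> F" "snd e1 = snd e2"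
        have "in_degree F (snd e1) \<le> 1" using L by (rule spec)
        then have "\<forall>e1a\<in>F. \<forall>e2a\<in>F. snd e1a = snd e1 \<longrightarrow> snd e2a = snd e1 \<longrightarrow> e1a = e2a"
          by (rule indeg_le1_iff[OF fin, THEN iffD1])
        then have "\<forall>e2a\<in>F. snd e1 = snd e1 \<longrightarrow> snd e2a = snd e1 \<longrightarrow> e1 = e2a"
          using h(1) by (rule bspec)
        then have "snd e2 = snd e1 \<longrightarrow> e1 = e2" using h(2) by simp
        then show "e1 = e2" using h(3) by simp
      qed
    next
      assume R: "\<forall>e1\<in>F. \<forall>e2\<in>F. snd e1 = snd e2 \<longrightarrow> e1 = e2"
      show "\<forall>v. in_degree F v \<le> 1"
      proof
        fix v
        have "\<forall>e1a\<in>F. \<forall>e2a\<in>F. snd e1a = v \<longrightarrow> snd e2a = v \<longrightarrow> e1a = e2a"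
        proof (intro ballI impI)
          fix e1a e2a assume "e1a \<in> F" "e2a \<in> F" "snd e1a = v" "snd e2a = v"
          then show "e1a = e2a" using R by simp
        qed
        then show "in_degree F v \<le> 1" by (rule indeg_le1_iff[OF fin, THEN iffD2])
      qed
    qed
  qed
  show ?thesis
  proof (cases "F \<subseteq> E")
    case True
    then show ?thesis using df_iff[OF assms(2), of F] key[OF True] by simp
  next
    case False
    then show ?thesis using df_iff[OF assms(2), of F] by simp
  qed
qed

lemma indeg_ge2:
  assumes "finite E" "in_degree E v \<noteq> 0" "in_degree E v \<noteq> 1"
  shows "\<exists>e1 e2. e1\<in>E \<and> e2\<in>E \<and> snd e1 = v \<and> snd e2 = v \<and> e1 \<noteq> e2"
proof -
  have "\<not> in_degree E v \<le> 1" using assms(2,3) by linarith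
  then show ?thesis using indeg_le1_iff[OF assms(1), of v] by blast
qed

lemma cone_of_deg1:
  assumes "finite E" "acyclic E" "in_degree E v = 1"
  shows "\<exists>e\<in>E. is_cone_with_apex E (DT E) e"
proof -
  obtain e where e: "{e\<in>E. snd e = v} = {e}"
    using assms(3) unfolding in_degree_def by (rule card_1_singletonE)
  have "e \<in> {x\<in>E. snd x = v}" by (subst e) simp
  then have ee: "e \<in> E" "snd e = v" by simp_all
  have uniq: "x = e" if "x \<in> E" "snd x = v" for x
  proof -
    have "x \<in> {x\<in>E. snd x = v}" using that by simp
    then have "x \<in> {e}" by (subst e[symmetric])
    then show ?thesis by simp
  qed
  have "is_cone_with_apex E (DT E) e"
    unfolding is_cone_with_apex_def DT_def
  proof (intro conjI ballI)
    show "e \<in> E" by (rule ee(1))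
  next
    fix F assume "F \<in> {F. directed_forest E F}"
    then have "directed_forest E F" by simp
    then have F: "F \<subseteq> E" "\<forall>e1\<in>F. \<forall>e2\<in>F. snd e1 = snd e2 \<longrightarrow> e1 = e2"
      unfolding forest_iff[OF assms(1,2)] by simp_all
    have "\<forall>e1\<in>insert e F. \<forall>e2\<in>insert e F. snd e1 = snd e2 \<longrightarrow> e1 = e2"
    proof (intro ballI impI)
      fix e1 e2 assume h: "e1 \<in> insert e F" "e2 \<in> insert e F" "snd e1 = snd e2"
      have "e1 \<in> E" "e2 \<in> E" using h(1,2) F(1) ee(1) by blast+
      show "e1 = e2"
      proof (cases "snd e1 = v")
        case True
        have "e1 = e" using uniq \<open>e1 \<in> E\<close> True by simp
        moreover have "e2 = e" using uniq \<open>e2 \<in> E\<close> True h(3) by simp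
        ultimately show ?thesis by simp
      next
        case False
        then have "e1 \<noteq> e" "e2 \<noteq> e" using h(3) ee(2) by auto
        then have "e1 \<in> F" "e2 \<in> F" using h(1,2) by simp_all
        then show ?thesis using h(3) F(2) by simp
      qed
    qed
    moreover have "insert e F \<subseteq> E" using F(1) ee(1) by simp
    ultimately show "insert e F \<in> {F. directed_forest E F}"
      by (simp add: forest_iff[OF assms(1,2)])
  qed
  then show ?thesis using ee(1) by blast
qed

lemma cone_imp_max:
  assumes "is_cone_with_apex E (DT E) e" "maximal_directed_forest E F"
  shows "e \<in> F"
proof (rule ccontr)
  assume "e \<notin> F"
  have "directed_forest E F" using assms(2) unfolding maximal_directed_forest_def by blast
  then have "directed_forest E (insert e F)" using assms(1)
    unfolding is_cone_with_apex_def DT_def by blast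
  moreover have "F \<subset> insert e F" using \<open>e \<notin> F\<close> by blast
  ultimately show False using assms(2) unfolding maximal_directed_forest_def by blast
qed

lemma exists_max:
  assumes "finite E" "directed_forest E F0"
  shows "\<exists>F. maximal_directed_forest E F \<and> F0 \<subseteq> F"
proof -
  let ?A = "{F. directed_forest E F \<and> F0 \<subseteq> F}"
  have fin: "finite ?A"
    by (rule finite_subset[of _ "Pow E"]) (auto simp: directed_forest_def assms(1))
  have ne: "?A \<noteq> {}" using assms(2) by blast
  obtain F where F: "F \<in> ?A" "\<forall>b\<in>?A. F \<le> b \<longrightarrow> F = b"
    using finite_has_maximal[OF fin ne] by blast
  then have "maximal_directed_forest E F"
    unfolding maximal_directed_forest_def by blast
  then show ?thesis using F by blast
qed

lemma max_imp_deg1: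
  assumes "finite E" "acyclic E" "e \<in> E" "\<forall>F. maximal_directed_forest E F \<longrightarrow> e \<in> F"
  shows "in_degree E (snd e) = 1"
proof (rule ccontr)
  assume n1: "in_degree E (snd e) \<noteq> 1"
  have n0: "in_degree E (snd e) \<noteq> 0"
  proof -
    have "e \<in> {x\<in>E. snd x = snd e}" "finite {x\<in>E. snd x = snd e}" using assms(1,3) by auto
    then have "card {x\<in>E. snd x = snd e} > 0" using card_gt_0_iff by blast
    then show ?thesis unfolding in_degree_def by simp
  qed
  obtain e1 e2 where e12: "e1\<in>E" "e2\<in>E" "snd e1 = snd e" "snd e2 = snd e" "e1 \<noteq> e2"
    using indeg_ge2[OF assms(1) n0 n1] by blast
  obtain e' where e': "e' \<in> E" "snd e' = snd e" "e' \<noteq> e"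
  proof (cases "e1 = e")
    case True
    then show ?thesis using that[of e2] e12 by simp
  next
    case False
    then show ?thesis using that[of e1] e12 by simp
  qed
  have "directed_forest E {e'}"
    using e' by (simp add: forest_iff[OF assms(1,2)])
  then obtain F where F: "maximal_directed_forest E F" "{e'} \<subseteq> F"
    using exists_max[OF assms(1)] by blast
  have eF: "e \<in> F" using assms(4) F(1) by blast
  have e'F: "e' \<in> F" using F(2) by simp
  have "directed_forest E F" using F(1) unfolding maximal_directed_forest_def by simp
  then have "\<forall>e1\<in>F. \<forall>e2\<in>F. snd e1 = snd e2 \<longrightarrow> e1 = e2"
    unfolding forest_iff[OF assms(1,2)] by simp
  then have "snd e' = snd e \<longrightarrow> e' = e" using eF e'F by simp
  then show False using e' by simp
qed



lemma coord_cont [continuous_intros]: "continuous_on S (\<lambda>x::'a \<Rightarrow> 'b::topological_space. x i)"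
  by (rule continuous_on_subset[OF continuous_on_product_coordinates]) simp

lemma snd_coord_cont: "continuous_on S (\<lambda>p::'c::topological_space \<times> ('a \<Rightarrow> 'b::topological_space). snd p i)"
proof (rule continuous_on_product_then_coordinatewise)
  show "continuous_on S snd" by (rule continuous_on_snd[OF continuous_on_id])
qed

lemma cone_contractible:
  fixes E :: "('v \<times> 'v) set"
  assumes fE: "finite E" and acE: "acyclic E" and cone: "is_cone_with_apex E (DT E) a"
  shows "contractible_complex E (DT E)"
proof -
  define R where "R = geom_realization E (DT E)"
  define d where "d = (\<lambda>x. if x = a then 1 else 0 :: real)"
  have aE: "a \<in> E" using cone unfolding is_cone_with_apex_def by blast
  have cone': "\<And>\<sigma>. \<sigma> \<in> DT E \<Longrightarrow> insert a \<sigma> \<in> DT E" using cone unfolding is_cone_with_apex_def by blast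
  have emp: "{} \<in> DT E" unfolding DT_def by (simp add: forest_iff[OF fE acE])
  have sing: "{a} \<in> DT E" using cone'[OF emp] .
  have suppd: "{x. d x \<noteq> 0} = {a}" by (auto simp: d_def)
  have sumd: "sum d E = 1" unfolding d_def using aE fE by simp
  have dR: "d \<in> R" unfolding R_def geom_realization_def
    using suppd sing aE sumd by (simp add: d_def)
  define h where "h = (\<lambda>p::real \<times> (('v\<times>'v) \<Rightarrow> real). (\<lambda>x. (1 - fst p) * snd p x + fst p * d x))"
  have hcont: "continuous_on ({0..1} \<times> R) h"
    unfolding h_def
    by (intro continuous_on_coordinatewise_then_product continuous_intros snd_coord_cont)
  have himg: "h (t, f) \<in> R" if t: "t \<in> {0..1}" and f: "f \<in> R" for t f
  proof -
    define g where "g = h (t, f)"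
    from f have f0: "\<forall>x. 0 \<le> f x" "{x. f x \<noteq> 0} \<in> DT E" "{x. f x \<noteq> 0} \<subseteq> E" "sum f E = 1"
      unfolding R_def geom_realization_def by auto
    have g': "\<And>x. g x = (1-t) * f x + t * d x" by (simp add: g_def h_def)
    have nn: "\<forall>x. 0 \<le> g x" using t f0(1) by (simp add: g' d_def)
    have supp: "{x. g x \<noteq> 0} \<in> DT E \<and> {x. g x \<noteq> 0} \<subseteq> E"
    proof (cases "t = 0")
      case True then show ?thesis using f0 by (simp add: g')
    next
      case t0: False
      show ?thesis
      proof (cases "t = 1")
        case True
        have "{x. g x \<noteq> 0} = {a}" by (auto simp: g' True d_def)
        then show ?thesis using sing aE by simp
      next
        case t1: False
        have tt: "0 < t" "t < 1" using t t0 t1 by auto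
        have "g x \<noteq> 0 \<longleftrightarrow> x = a \<or> f x \<noteq> 0" for x
        proof (cases "x = a")
          case True
          have "0 \<le> f x" using f0(1) by (rule spec)
          then have "0 \<le> (1-t) * f x" using tt by simp
          then have "g x > 0" using tt by (simp add: g' True d_def)
          then show ?thesis using True by simp
        next
          case False
          then show ?thesis using tt by (simp add: g' d_def)
        qed
        then have "{x. g x \<noteq> 0} = insert a {x. f x \<noteq> 0}" by blast
        then show ?thesis using cone'[OF f0(2)] f0(3) aE by simp
      qed
    qed
    have "sum g E = (1-t) * sum f E + t * sum d E"
      by (simp add: g' sum.distrib sum_distrib_left)
    then have "sum g E = 1" using f0(4) sumd by simp
    then show ?thesis unfolding R_def geom_realization_def g_def[symmetric] using nn supp by simp
  qed
  have "homotopic_with_canon (\<lambda>x. True) R R id (\<lambda>x. d)"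
    unfolding homotopic_with_def
  proof (intro exI[of _ h] conjI allI ballI)
    show "continuous_map (prod_topology (top_of_set {0..1}) (top_of_set R)) (top_of_set R) h"
      using hcont himg by (auto simp: image_subset_iff_funcset[symmetric])
    fix x show "h (0, x) = id x" by (simp add: h_def)
  next
    fix x show "h (1, x) = d" by (simp add: h_def)
  qed simp
  then have "contractible R" unfolding contractible_def by blast
  then show ?thesis unfolding contractible_complex_def R_def[symmetric] using dR by blast
qed



declare split_paired_All [simp del] split_paired_Ex [simp del]

lemma noncontr:
  fixes E :: "('v \<times> 'v) set"
  assumes fE: "finite E" and acE: "acyclic E" and nd1: "\<forall>v. in_degree E v \<noteq> 1"
    and cc: "contractible_complex E (DT E)"
  shows False
proof -
  define R where "R = geom_realization E (DT E)"
  have Rne: "R \<noteq> {}" and cR: "contractible R"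
    using cc unfolding contractible_complex_def R_def by auto
  have Rp1: "0 \<le> f x" if "f \<in> R" for f x
  proof -
    have "\<forall>x. 0 \<le> f x" using that unfolding R_def geom_realization_def by blast
    then show ?thesis by (rule spec)
  qed
  have Rp2: "x \<in> E" if "f \<in> R" "f x \<noteq> 0" for f x
    using that unfolding R_def geom_realization_def by blast
  have Rp3: "sum f E = 1" if "f \<in> R" for f
    using that unfolding R_def geom_realization_def by simp
  have Rp4: "e1 = e2" if "f \<in> R" "f e1 \<noteq> 0" "f e2 \<noteq> 0" "snd e1 = snd e2" for f e1 e2
  proof -
    have "{x. f x \<noteq> 0} \<in> DT E" using that(1) unfolding R_def geom_realization_def by simp
    then have "directed_forest E {x. f x \<noteq> 0}" unfolding DT_def by simp
    then have "\<forall>e1\<in>{x. f x \<noteq> 0}. \<forall>e2\<in>{x. f x \<noteq> 0}. snd e1 = snd e2 \<longrightarrow> e1 = e2"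
      unfolding forest_iff[OF fE acE] by simp
    then show ?thesis using that(2,3,4) by simp
  qed
  have Rex: "\<exists>e\<in>E. f e \<noteq> 0" if "f \<in> R" for f
  proof (rule ccontr)
    assume "\<not> (\<exists>e\<in>E. f e \<noteq> 0)"
    then have "sum f E = 0" by simp
    then show False using Rp3[OF that] by simp
  qed
  define W where "W = snd ` E"
  define k where "k = card W"
  have fW: "finite W" using fE by (simp add: W_def)
  obtain \<iota> where \<iota>: "bij_betw \<iota> {..<k} W"
    using ex_bij_betw_nat_finite[OF fW] by (auto simp: k_def lessThan_atLeast0)
  have \<iota>inj: "inj_on \<iota> {..<k}" and \<iota>W: "\<iota> ` {..<k} = W"
    using \<iota> unfolding bij_betw_def by auto
  have two: "\<exists>p. fst p \<in> E \<and> snd p \<in> E \<and> snd (fst p) = \<iota> i \<and> snd (snd p) = \<iota> i \<and> fst p \<noteq> snd p"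
    if "i \<in> {..<k}" for i
  proof -
    have w: "\<iota> i \<in> W" using \<iota>W that by blast
    then obtain e where e: "e \<in> E" "snd e = \<iota> i" by (auto simp: W_def)
    have "e \<in> {x\<in>E. snd x = \<iota> i}" "finite {x\<in>E. snd x = \<iota> i}" using e fE by auto
    then have "card {x\<in>E. snd x = \<iota> i} > 0" using card_gt_0_iff by blast
    then have n0: "in_degree E (\<iota> i) \<noteq> 0" unfolding in_degree_def by simp
    have n1: "in_degree E (\<iota> i) \<noteq> 1" using nd1 by simp
    obtain e1 e2 where "e1\<in>E" "e2\<in>E" "snd e1 = \<iota> i" "snd e2 = \<iota> i" "e1 \<noteq> e2"
      using indeg_ge2[OF fE n0 n1] by blast
    then show ?thesis by (intro exI[of _ "(e1,e2)"]) simp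
  qed
  then have allp: "\<forall>i\<in>{..<k}. \<exists>p. fst p \<in> E \<and> snd p \<in> E \<and> snd (fst p) = \<iota> i \<and> snd (snd p) = \<iota> i \<and> fst p \<noteq> snd p"
    by blast
  obtain ab where ab: "\<forall>i\<in>{..<k}. fst (ab i) \<in> E \<and> snd (ab i) \<in> E \<and> snd (fst (ab i)) = \<iota> i \<and> snd (snd (ab i)) = \<iota> i \<and> fst (ab i) \<noteq> snd (ab i)"
    using bchoice[OF allp] by (rule exE)
  define a where "a = (\<lambda>i. fst (ab i))"
  define b where "b = (\<lambda>i. snd (ab i))"
  have aE: "a i \<in> E" and bE: "b i \<in> E" and sa: "snd (a i) = \<iota> i" and sb: "snd (b i) = \<iota> i"
    and abne: "a i \<noteq> b i" if "i < k" for i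
    using ab that unfolding a_def b_def by auto
  define J where "J = (\<lambda>e::'v\<times>'v. inv_into {..<k} \<iota> (snd e))"
  have JE: "J e < k" "\<iota> (J e) = snd e" if "e \<in> E" for e
  proof -
    have "snd e \<in> \<iota> ` {..<k}" using that \<iota>W by (auto simp: W_def)
    then have "inv_into {..<k} \<iota> (snd e) \<in> {..<k}" "\<iota> (inv_into {..<k} \<iota> (snd e)) = snd e"
      by (rule inv_into_into, rule f_inv_into_f)
    then show "J e < k" "\<iota> (J e) = snd e" unfolding J_def by simp_all
  qed
  have Jsnd: "J e = i" if "i < k" "snd e = \<iota> i" for e i
    unfolding J_def using that \<iota>inj by (simp add: inv_into_f_f)
  have Ja: "J (a i) = i" and Jb: "J (b i) = i" if "i < k" for i
    using Jsnd[OF that] sa[OF that] sb[OF that] by auto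
  have \<iota>eq: "i = j" if "i < k" "j < k" "\<iota> i = \<iota> j" for i j
    using \<iota>inj that by (simp add: inj_on_def)
  have k0: "k > 0"
  proof -
    obtain f where "f \<in> R" using Rne by blast
    then obtain e where "e \<in> E" using Rex by blast
    then have "W \<noteq> {}" by (auto simp: W_def)
    then show ?thesis using fW by (simp add: k_def card_gt_0_iff)
  qed
  obtain n where kn: "k = Suc n" using k0 gr0_implies_Suc by blast
  define S where "S = {x::nat \<Rightarrow> real. (\<Sum>i\<le>n. x i ^ 2) = 1 \<and> (\<forall>i>n. x i = 0)}"
  have nsS: "nsphere n = top_of_set S" by (simp add: nsphere S_def euclidean_product_topology)
  have atM: "{..n} = {..<k}" using kn lessThan_Suc_atMost by simp
  have Sp1: "(\<Sum>i<k. x i ^ 2) = 1" if "x \<in> S" for x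
    using that atM unfolding S_def by simp
  have Sp2: "x i = 0" if "x \<in> S" "\<not> i < k" for x i
    using that kn unfolding S_def by simp
  define In where "In = (\<lambda>i. {e\<in>E. snd e = \<iota> i})"
  have fIn: "finite (In i)" for i using fE unfolding In_def by simp
  define y where "y = (\<lambda>(f::('v\<times>'v) \<Rightarrow> real) i. (\<Sum>e\<in>In i. f e) - 2 * f (b i))"
  define N where "N = (\<lambda>f. sqrt (\<Sum>i<k. (y f i)^2))"
  define r where "r = (\<lambda>f. (\<lambda>i. if i < k then y f i / N f else 0))"
  define L where "L = (\<lambda>x::nat\<Rightarrow>real. \<Sum>i<k. \<bar>x i\<bar>)"
  define g where "g = (\<lambda>x e. (if e \<in> E \<and> e = a (J e) then max (x (J e)) 0
        else if e \<in> E \<and> e = b (J e) then max (- x (J e)) 0 else 0) / L x)"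

  have Npos: "N f > 0" if f: "f \<in> R" for f
  proof -
    obtain e where e: "e \<in> E" "f e \<noteq> 0" using Rex[OF f] by blast
    define i where "i = J e"
    have i: "i < k" "\<iota> i = snd e" using JE[OF e(1)] unfolding i_def by auto
    have eIn: "e \<in> In i" using e(1) i(2) unfolding In_def by simp
    have z: "f e' = 0" if "e' \<in> In i - {e}" for e'
    proof (rule ccontr)
      assume "f e' \<noteq> 0"
      moreover have "snd e' = snd e" using that i(2) unfolding In_def by simp
      ultimately have "e' = e" using Rp4[OF f _ e(2)] by blast
      then show False using that by simp
    qed
    have "(\<Sum>e\<in>In i. f e) = f e + (\<Sum>e\<in>In i - {e}. f e)"
      using sum.remove[OF fIn eIn] by simp
    also have "(\<Sum>e\<in>In i - {e}. f e) = 0" using z by simp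
    finally have sIn: "(\<Sum>e\<in>In i. f e) = f e" by simp
    have yne: "y f i \<noteq> 0"
    proof (cases "b i = e")
      case True
      then show ?thesis using sIn e(2) unfolding y_def by simp
    next
      case False
      have "f (b i) = 0"
      proof (rule ccontr)
        assume "f (b i) \<noteq> 0"
        then have "b i = e" using Rp4[OF f _ e(2)] sb[OF i(1)] i(2) by simp
        then show False using False by simp
      qed
      then show ?thesis using sIn e(2) unfolding y_def by simp
    qed
    have "(\<Sum>j<k. (y f j)^2) \<noteq> 0"
    proof
      assume "(\<Sum>j<k. (y f j)^2) = 0"
      then have "\<forall>j\<in>{..<k}. (y f j)^2 = 0" by (subst sum_nonneg_eq_0_iff[symmetric]) auto
      then show False using yne i(1) by simp
    qed
    moreover have "(\<Sum>j<k. (y f j)^2) \<ge> 0" by (simp add: sum_nonneg)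
    ultimately show ?thesis unfolding N_def by simp
  qed

  have Lpos: "L x > 0" if x: "x \<in> S" for x
  proof -
    have "(\<Sum>i<k. \<bar>x i\<bar>) \<noteq> 0"
    proof
      assume "(\<Sum>i<k. \<bar>x i\<bar>) = 0"
      then have "\<forall>i\<in>{..<k}. \<bar>x i\<bar> = 0" by (subst sum_nonneg_eq_0_iff[symmetric]) auto
      then have "(\<Sum>i<k. x i ^ 2) = 0" by simp
      then show False using Sp1[OF x] by simp
    qed
    moreover have "(\<Sum>i<k. \<bar>x i\<bar>) \<ge> 0" by (simp add: sum_nonneg)
    ultimately show ?thesis unfolding L_def by linarith
  qed

  have rcont: "continuous_on R r"
    unfolding r_def
  proof (rule continuous_on_coordinatewise_then_product)
    fix i
    show "continuous_on R (\<lambda>f. if i < k then y f i / N f else 0)"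
    proof (cases "i < k")
      case True
      have c1: "continuous_on R (\<lambda>f. y f i)" unfolding y_def by (intro continuous_intros)
      have c2: "continuous_on R N" unfolding N_def y_def by (intro continuous_intros)
      have c3: "\<forall>f\<in>R. N f \<noteq> 0" using Npos by (metis less_irrefl)
      have "continuous_on R (\<lambda>f. y f i / N f)"
        by (rule continuous_on_divide[OF c1 c2 c3])
      then show ?thesis using True by simp
    next
      case False
      then show ?thesis by simp
    qed
  qed

  have rimg: "r f \<in> S" if f: "f \<in> R" for f
  proof -
    have Nsq: "(N f)^2 = (\<Sum>j<k. (y f j)^2)" unfolding N_def by (simp add: sum_nonneg)
    have "(\<Sum>j\<le>n. (r f j)^2) = (\<Sum>j<k. (y f j)^2 / (N f)^2)"
      unfolding atM r_def by (simp add: power_divide)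
    also have "\<dots> = (\<Sum>j<k. (y f j)^2) / (N f)^2" by (simp add: sum_divide_distrib)
    also have "\<dots> = 1"
    proof -
      have "(N f)^2 \<noteq> 0" using Npos[OF f] by simp
      then have "(\<Sum>j<k. (y f j)^2) \<noteq> 0" using Nsq by simp
      then show ?thesis using Nsq by simp
    qed
    finally show ?thesis unfolding S_def r_def using kn by simp
  qed

  have gcont: "continuous_on S g"
    unfolding g_def
  proof (rule continuous_on_coordinatewise_then_product)
    fix e
    have Lc: "continuous_on S L" unfolding L_def by (intro continuous_intros)
    have L0: "\<forall>x\<in>S. L x \<noteq> 0" using Lpos by force
    show "continuous_on S (\<lambda>x. (if e \<in> E \<and> e = a (J e) then max (x (J e)) 0
        else if e \<in> E \<and> e = b (J e) then max (- x (J e)) 0 else 0) / L x)"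
    proof (cases "e \<in> E \<and> e = a (J e)")
      case True
      then show ?thesis using Lc L0 by (simp, intro continuous_intros) auto
    next
      case False
      then show ?thesis
      proof (cases "e \<in> E \<and> e = b (J e)")
        case True
        then show ?thesis using Lc L0 \<open>\<not> (e \<in> E \<and> e = a (J e))\<close> by (simp, intro continuous_intros) auto
      next
        case False
        have h: "(e \<in> E \<and> e = a (J e)) = False" "(e \<in> E \<and> e = b (J e)) = False"
          using False \<open>\<not> (e \<in> E \<and> e = a (J e))\<close> by blast+
        show ?thesis by (simp only: h if_False) simp
      qed
    qed
  qed

  have ga: "g x (a i) = max (x i) 0 / L x" if "i < k" for x i
    using that aE[OF that] Ja[OF that] unfolding g_def by simp
  have gb: "g x (b i) = max (- x i) 0 / L x" if "i < k" for x i
    using that bE[OF that] Jb[OF that] abne[OF that] unfolding g_def by simp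
  have g0: "e \<in> E \<and> (\<exists>i<k. e = a i \<or> e = b i)" if "g x e \<noteq> 0" for x e
  proof (cases "e \<in> E \<and> (e = a (J e) \<or> e = b (J e))")
    case True
    then show ?thesis using JE[of e] by blast
  next
    case False
    then have "g x e = 0" unfolding g_def by auto
    then show ?thesis using that by simp
  qed

  have gimg: "g x \<in> R" if x: "x \<in> S" for x
  proof -
    have Lx: "L x > 0" using Lpos[OF x] .
    have nn: "\<forall>e. 0 \<le> g x e" unfolding g_def using Lx by simp
    have sE: "{e. g x e \<noteq> 0} \<subseteq> E" using g0 by blast
    have forest: "\<forall>e1\<in>{e. g x e \<noteq> 0}. \<forall>e2\<in>{e. g x e \<noteq> 0}. snd e1 = snd e2 \<longrightarrow> e1 = e2"
    proof (intro ballI impI)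
      fix e1 e2 assume h1: "e1 \<in> {e. g x e \<noteq> 0}" and h2: "e2 \<in> {e. g x e \<noteq> 0}" and s: "snd e1 = snd e2"
      obtain i where i: "i < k" "e1 = a i \<or> e1 = b i" using g0 h1 by blast
      obtain j where j: "j < k" "e2 = a j \<or> e2 = b j" using g0 h2 by blast
      have "\<iota> i = \<iota> j" using i j s sa sb by auto
      then have ij: "i = j" using \<iota>eq i(1) j(1) by blast
      have nb: "\<not> (g x (a i) \<noteq> 0 \<and> g x (b i) \<noteq> 0)"
        using ga[OF i(1)] gb[OF i(1)] by (auto simp: max_def split: if_splits)
      show "e1 = e2" using i j ij h1 h2 nb by auto
    qed
    have df: "{e. g x e \<noteq> 0} \<in> DT E"
      unfolding DT_def using sE forest by (simp add: forest_iff[OF fE acE])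
    define A where "A = a ` {..<k}"
    define B where "B = b ` {..<k}"
    have ABE: "A \<union> B \<subseteq> E" unfolding A_def B_def using aE bE by auto
    have AB: "A \<inter> B = {}"
    proof (rule ccontr)
      assume "A \<inter> B \<noteq> {}"
      then obtain z where z: "z \<in> A" "z \<in> B" by blast
      obtain i where i: "i < k" "z = a i" using z(1) unfolding A_def by blast
      obtain j where j: "j < k" "z = b j" using z(2) unfolding B_def by blast
      have ij: "i < k" "j < k" "a i = b j" using i j by simp_all
      then have "\<iota> i = \<iota> j" using sa sb by metis
      then have "i = j" using \<iota>eq ij by blast
      then show False using ij abne by simp
    qed
    have ainj: "inj_on a {..<k}"
      unfolding inj_on_def using sa \<iota>eq by (metis lessThan_iff)
    have binj: "inj_on b {..<k}"
      unfolding inj_on_def using sb \<iota>eq by (metis lessThan_iff)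
    have "sum (g x) E = sum (g x) (A \<union> B)"
    proof (rule sum.mono_neutral_right[OF fE ABE])
      show "\<forall>i\<in>E - (A \<union> B). g x i = 0"
        using g0 unfolding A_def B_def by blast
    qed
    also have "\<dots> = sum (g x) A + sum (g x) B"
      by (rule sum.union_disjoint) (use AB in \<open>auto simp: A_def B_def\<close>)
    also have "sum (g x) A = (\<Sum>i<k. g x (a i))"
      unfolding A_def by (rule sum.reindex_cong[OF ainj]) auto
    also have "sum (g x) B = (\<Sum>i<k. g x (b i))"
      unfolding B_def by (rule sum.reindex_cong[OF binj]) auto
    also have "(\<Sum>i<k. g x (a i)) + (\<Sum>i<k. g x (b i)) = (\<Sum>i<k. \<bar>x i\<bar> / L x)"
    proof -
      have mm: "max t 0 + max (- t) 0 = \<bar>t\<bar>" for t :: real by (cases "t \<ge> 0") (simp_all add: max_def)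
      show ?thesis by (simp add: sum.distrib[symmetric] ga gb add_divide_distrib[symmetric] mm)
    qed
    also have "\<dots> = L x / L x" by (subst sum_divide_distrib[symmetric]) (simp only: L_def)
    also have "\<dots> = 1" using Lx by simp
    finally have s1: "sum (g x) E = 1" .
    show ?thesis unfolding R_def geom_realization_def using nn df sE s1 by simp
  qed

  have rg: "r (g x) = x" if x: "x \<in> S" for x
  proof
    fix j
    show "r (g x) j = x j"
    proof (cases "j < k")
      case False
      then show ?thesis using Sp2[OF x False] unfolding r_def by simp
    next
      case True
      have Lx: "L x > 0" using Lpos[OF x] .
      have sub: "{a j, b j} \<subseteq> In j" unfolding In_def using aE bE sa sb True by auto
      have "(\<Sum>e\<in>In j. g x e) = (\<Sum>e\<in>{a j, b j}. g x e)"
      proof (rule sum.mono_neutral_right[OF fIn sub])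
        show "\<forall>e\<in>In j - {a j, b j}. g x e = 0"
        proof
          fix e assume e: "e \<in> In j - {a j, b j}"
          show "g x e = 0"
          proof (rule ccontr)
            assume "g x e \<noteq> 0"
            then obtain i where i: "i < k" "e = a i \<or> e = b i" using g0 by blast
            have "snd e = \<iota> j" using e unfolding In_def by simp
            then have "\<iota> i = \<iota> j" using i sa sb by auto
            then have "i = j" using \<iota>eq i(1) True by blast
            then show False using i e by auto
          qed
        qed
      qed
      also have "\<dots> = g x (a j) + g x (b j)" using abne[OF True] by simp
      finally have sIn: "(\<Sum>e\<in>In j. g x e) = g x (a j) + g x (b j)" .
      have yj: "y (g x) i = x i / L x" if "i < k" for i
      proof -
        have sub: "{a i, b i} \<subseteq> In i" unfolding In_def using aE bE sa sb that by auto
        have "(\<Sum>e\<in>In i. g x e) = (\<Sum>e\<in>{a i, b i}. g x e)"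
        proof (rule sum.mono_neutral_right[OF fIn sub])
          show "\<forall>e\<in>In i - {a i, b i}. g x e = 0"
          proof
            fix e assume e: "e \<in> In i - {a i, b i}"
            show "g x e = 0"
            proof (rule ccontr)
              assume "g x e \<noteq> 0"
              then obtain i' where i': "i' < k" "e = a i' \<or> e = b i'" using g0 by blast
              have "snd e = \<iota> i" using e unfolding In_def by simp
              then have "\<iota> i' = \<iota> i" using i' sa sb by auto
              then have "i' = i" using \<iota>eq i'(1) that by blast
              then show False using i' e by auto
            qed
          qed
        qed
        also have "\<dots> = g x (a i) + g x (b i)" using abne[OF that] by simp
        finally have "(\<Sum>e\<in>In i. g x e) = g x (a i) + g x (b i)" .
        then have "y (g x) i = g x (a i) - g x (b i)" unfolding y_def by simp
        also have "\<dots> = (max (x i) 0 - max (- x i) 0) / L x"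
          using ga[OF that] gb[OF that] by (simp add: diff_divide_distrib)
        also have "max (x i) 0 - max (- x i) 0 = x i" by (cases "x i \<ge> 0") (simp_all add: max_def)
        finally show ?thesis .
      qed
      have "(\<Sum>i<k. (y (g x) i)^2) = (\<Sum>i<k. (x i)^2 / (L x)^2)"
        using yj by (simp add: power_divide)
      also have "\<dots> = 1 / (L x)^2" using Sp1[OF x] by (simp add: sum_divide_distrib[symmetric])
      finally have "N (g x) = sqrt (1 / (L x)^2)" unfolding N_def by simp
      also have "\<dots> = 1 / L x" using Lx by (simp add: real_sqrt_divide)
      finally have Ng: "N (g x) = 1 / L x" .
      show ?thesis unfolding r_def using True yj[OF True] Ng Lx by simp
    qed
  qed

  have "retraction_maps (top_of_set R) (top_of_set S) r g"
    unfolding retraction_maps_def using rcont rimg gcont gimg rg by auto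
  then have "retraction_map (top_of_set R) (top_of_set S) r"
    unfolding retraction_map_def by blast
  moreover have "contractible_space (top_of_set R)" using cR by simp
  ultimately have "contractible_space (top_of_set S)"
    by (rule contractible_space_retraction_map_image)
  then show False using non_contractible_space_nsphere[of n] nsS by simp
qed


declare split_paired_All [simp] split_paired_Ex [simp]

theorem corollary2p13:
  fixes V :: "'v set" and E :: "('v \<times> 'v) set"
  assumes "finite V" and "E \<subseteq> V \<times> V" and "acyclic E"
  shows "((\<exists>e\<in>E. is_cone_with_apex E (DT E) e) \<longleftrightarrow>
           (\<exists>e\<in>E. \<forall>F. maximal_directed_forest E F \<longrightarrow> e \<in> F))
       \<and> ((\<exists>e\<in>E. \<forall>F. maximal_directed_forest E F \<longrightarrow> e \<in> F) \<longleftrightarrow>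
           (\<exists>v\<in>V. in_degree E v = 1))
       \<and> ((\<exists>v\<in>V. in_degree E v = 1) \<longleftrightarrow>
           (\<Prod>v\<in>V. (int (in_degree E v) - 1)) = 0)
       \<and> (((\<Prod>v\<in>V. (int (in_degree E v) - 1)) = 0) \<longleftrightarrow>
           contractible_complex E (DT E))"
proof -
  have fE: "finite E"
    using assms(1,2) finite_subset finite_cartesian_product by blast
  have acE: "acyclic E" by (rule assms(3))
  have c31: "\<exists>e\<in>E. is_cone_with_apex E (DT E) e" if hv: "\<exists>v\<in>V. in_degree E v = 1"
  proof -
    obtain v where "in_degree E v = 1" using hv by blast
    then show ?thesis using cone_of_deg1[OF fE acE] by blast
  qed
  have c12: "\<exists>e\<in>E. \<forall>F. maximal_directed_forest E F \<longrightarrow> e \<in> F"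
    if he: "\<exists>e\<in>E. is_cone_with_apex E (DT E) e"
  proof -
    obtain e where e: "e \<in> E" "is_cone_with_apex E (DT E) e" using he by blast
    have "\<forall>F. maximal_directed_forest E F \<longrightarrow> e \<in> F"
      using cone_imp_max[OF e(2)] by blast
    then show ?thesis using e(1) by blast
  qed
  have c23: "\<exists>v\<in>V. in_degree E v = 1"
    if he: "\<exists>e\<in>E. \<forall>F. maximal_directed_forest E F \<longrightarrow> e \<in> F"
  proof -
    obtain e where e: "e \<in> E" "\<forall>F. maximal_directed_forest E F \<longrightarrow> e \<in> F" using he by blast
    have "in_degree E (snd e) = 1" by (rule max_imp_deg1[OF fE acE e(1) e(2)])
    moreover have "snd e \<in> V" using e(1) assms(2) by (auto simp: mem_Times_iff)
    ultimately show ?thesis by blast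
  qed
  have c34: "(\<exists>v\<in>V. in_degree E v = 1) \<longleftrightarrow> (\<Prod>v\<in>V. (int (in_degree E v) - 1)) = 0"
  proof -
    have "(\<Prod>v\<in>V. (int (in_degree E v) - 1)) = 0 \<longleftrightarrow> (\<exists>v\<in>V. int (in_degree E v) - 1 = 0)"
      by (rule prod_zero_iff[OF assms(1)])
    moreover have "\<And>v. int (in_degree E v) - 1 = 0 \<longleftrightarrow> in_degree E v = 1" by simp
    ultimately show ?thesis by simp
  qed
  have c15: "contractible_complex E (DT E)" if hv: "\<exists>v\<in>V. in_degree E v = 1"
  proof -
    obtain e where "e \<in> E" "is_cone_with_apex E (DT E) e" using c31[OF hv] by blast
    then show ?thesis using cone_contractible[OF fE acE] by blast
  qed
  have c51: "\<exists>v\<in>V. in_degree E v = 1" if cc: "contractible_complex E (DT E)"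
  proof (rule ccontr)
    assume no: "\<not> (\<exists>v\<in>V. in_degree E v = 1)"
    have "\<forall>v. in_degree E v \<noteq> 1"
    proof
      fix v
      show "in_degree E v \<noteq> 1"
      proof (cases "v \<in> V")
        case True
        then show ?thesis using no by blast
      next
        case False
        have emp: "{e\<in>E. snd e = v} = {}" using False assms(2) by (auto simp: mem_Times_iff)
        show ?thesis unfolding in_degree_def emp by simp
      qed
    qed
    then show False using noncontr[OF fE acE _ cc] by blast
  qed
  show ?thesis
  proof (intro conjI)
    show "(\<exists>e\<in>E. is_cone_with_apex E (DT E) e) \<longleftrightarrow>
           (\<exists>e\<in>E. \<forall>F. maximal_directed_forest E F \<longrightarrow> e \<in> F)"
      using c12 c23 c31 by blast
    show "(\<exists>e\<in>E. \<forall>F. maximal_directed_forest E F \<longrightarrow> e \<in> F) \<longleftrightarrow>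
           (\<exists>v\<in>V. in_degree E v = 1)"
      using c12 c23 c31 by blast
    show "(\<exists>v\<in>V. in_degree E v = 1) \<longleftrightarrow> (\<Prod>v\<in>V. (int (in_degree E v) - 1)) = 0"
      by (rule c34)
    show "((\<Prod>v\<in>V. (int (in_degree E v) - 1)) = 0) \<longleftrightarrow> contractible_complex E (DT E)"
      using c34 c15 c51 by blast
  qed
qed

end
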